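(* Let $X$ be a real random variable with distribution $F$ and mean $\mu$, let $\psi(\theta)=\log E[e^{\theta X}]$ and $\mathcal D=\{\theta:\psi(\theta)<\infty\}$. Let $b>\mu$, suppose $0\in\mathcal D^\circ$ and there is a unique $\theta^*\in\mathcal D^\circ$ with $\psi'(\theta^* )=b$. Let $(u_n)$ be a sequence of truncation levels for which there exists $\theta'>0$ with $\theta^*+\theta'\in\mathcal D^\circ$ and $\lim_{n\to\infty}ne^{-\theta' u_n}=0$. Define $\psi_n(\theta)=\log E[e^{\theta X}\mid X\le u_n]$. Then $$\lim_{n\to\infty}n\big(\psi_n'(\theta^* )-\psi'(\theta^* )\big)=0,\qquad \lim_{n\to\infty}n\big(\psi_n(\theta^* )-\psi(\theta^* )\big)=0.$$
   Context: $\mathcal D^\circ$ denotes the interior of $\mathcal D$. *)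

theory Defs
  imports "HOL-Probability.Probability"
begin

text \<open>F is the distribution of X, modelled as a probability measure on the Borel reals.\<close>

definition cgf :: "real measure \<Rightarrow> real \<Rightarrow> real" where
  "cgf F \<theta> = ln (\<integral>x. exp (\<theta> * x) \<partial>F)"

definition cgf_dom :: "real measure \<Rightarrow> real set" where
  "cgf_dom F = {\<theta>. integrable F (\<lambda>x. exp (\<theta> * x))}"

definition trunc_cgf :: "real measure \<Rightarrow> real \<Rightarrow> real \<Rightarrow> real" where
  "trunc_cgf F u \<theta> = ln ((LINT x:{..u}|F. exp (\<theta> * x)) / measure F {..u})"

end

theory Submission
  imports Defs
begin

lemma exp_abs_bound: "exp (c * \<bar>x\<bar>) * exp (\<theta> * x) \<le> exp ((\<theta> + c) * x) + exp ((\<theta> - c) * x)"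
  for c x \<theta> :: real
proof (cases "x \<ge> 0")
  case True
  then have "exp (c * \<bar>x\<bar>) * exp (\<theta> * x) = exp ((\<theta> + c) * x)"
    by (simp add: exp_add[symmetric] algebra_simps)
  then show ?thesis by (simp add: add_increasing2)
next
  case False
  then have "exp (c * \<bar>x\<bar>) * exp (\<theta> * x) = exp ((\<theta> - c) * x)"
    by (simp add: exp_add[symmetric] algebra_simps)
  then show ?thesis by (simp add: add_increasing)
qed

lemma int_bound:
  assumes S: "sets F = sets borel"
    and c: "c > 0" "\<theta> + c \<in> cgf_dom F" "\<theta> - c \<in> cgf_dom F"
    and g: "g \<in> borel_measurable borel"
    and bd: "\<And>x. \<bar>g x\<bar> \<le> K * (exp (c*\<bar>x\<bar>) * exp (\<theta>*x))"
  shows "integrable F g"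
proof -
  have K: "K \<ge> 0"
  proof -
    have "0 \<le> K * (exp (c*\<bar>0\<bar>) * exp (\<theta>*0))" using bd[of 0] by linarith
    then show ?thesis by simp
  qed
  have i: "integrable F (\<lambda>x. K * (exp ((\<theta> + c) * x) + exp ((\<theta> - c) * x)))"
    using c by (auto simp: cgf_dom_def)
  show ?thesis
  proof (rule Bochner_Integration.integrable_bound[OF i])
    show "g \<in> borel_measurable F" using g measurable_cong_sets[OF S refl] by blast
    show "AE x in F. norm (g x) \<le> norm (K * (exp ((\<theta> + c) * x) + exp ((\<theta> - c) * x)))"
    proof (rule AE_I2)
      fix x
      have "\<bar>g x\<bar> \<le> K * (exp (c*\<bar>x\<bar>) * exp (\<theta>*x))" by (rule bd)
      also have "\<dots> \<le> K * (exp ((\<theta> + c) * x) + exp ((\<theta> - c) * x))"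
        using K exp_abs_bound by (rule mult_left_mono[rotated])
      finally show "norm (g x) \<le> norm (K * (exp ((\<theta> + c) * x) + exp ((\<theta> - c) * x)))"
        using K by simp
    qed
  qed
qed

lemma abs_le_exp: "c > 0 \<Longrightarrow> \<bar>x\<bar> \<le> (1/c) * exp (c * \<bar>x\<bar>)" for c x :: real
proof -
  assume c: "c > 0"
  have "c * \<bar>x\<bar> \<le> exp (c * \<bar>x\<bar>)" using exp_ge_add_one_self[of "c*\<bar>x\<bar>"] by linarith
  then show ?thesis using c by (simp add: field_simps)
qed

lemma sq_le_exp: "c > 0 \<Longrightarrow> x^2 \<le> (2/c^2) * exp (c * \<bar>x\<bar>)" for c x :: real
proof -
  assume c: "c > 0"
  have "1 + c*\<bar>x\<bar> + (c*\<bar>x\<bar>)^2/2 \<le> exp (c * \<bar>x\<bar>)"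
    using exp_lower_Taylor_quadratic[of "c*\<bar>x\<bar>"] c by simp
  then have "(c*\<bar>x\<bar>)^2/2 \<le> exp (c * \<bar>x\<bar>)" using c by (smt (verit) mult_nonneg_nonneg abs_ge_zero)
  then have "c^2 * x^2 \<le> 2 * exp (c * \<bar>x\<bar>)" by (simp add: power_mult_distrib)
  moreover have "c^2 > 0" using c by simp
  ultimately have "x^2 \<le> (2 * exp (c * \<bar>x\<bar>)) / c^2" by (simp add: le_divide_eq mult.commute)
  then show ?thesis by simp
qed

lemma exp_taylor2: "\<bar>exp y - 1 - y\<bar> \<le> y^2 * exp \<bar>y\<bar>" for y :: real
proof -
  obtain t where t: "\<bar>t\<bar> \<le> \<bar>y\<bar>" "exp y = (\<Sum>m<2. (y ^ m) / fact m) + (exp t / fact 2) * y ^ 2"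
    using Maclaurin_exp_le[of y 2] by blast
  have e: "exp y - 1 - y = exp t / 2 * y^2" using t(2) by (simp add: numeral_2_eq_2)
  have n: "0 \<le> exp t / 2 * y^2" by simp
  have "exp t \<le> exp \<bar>y\<bar>" using t(1) by simp
  then have "exp t / 2 \<le> exp \<bar>y\<bar>" using exp_gt_zero[of t] by linarith
  then have le: "exp t / 2 * y^2 \<le> exp \<bar>y\<bar> * y^2"
    by (intro mult_right_mono) auto
  have a: "\<bar>exp y - 1 - y\<bar> = exp t / 2 * y^2" using e n by (simp only: abs_of_nonneg)
  have c: "y^2 * exp \<bar>y\<bar> = exp \<bar>y\<bar> * y^2" by (rule mult.commute)
  show ?thesis using a c le by linarith
qed


lemma interior_delta:
  assumes "\<theta>0 \<in> interior (cgf_dom F)"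
  obtains \<delta> where "\<delta> > 0" "\<And>t. \<bar>t - \<theta>0\<bar> \<le> 2*\<delta> \<Longrightarrow> t \<in> cgf_dom F"
proof -
  obtain e where e: "e > 0" "ball \<theta>0 e \<subseteq> cgf_dom F" using assms mem_interior by blast
  show ?thesis
  proof (rule that[of "e/3"])
    show "e/3 > 0" using e by simp
    fix t assume "\<bar>t - \<theta>0\<bar> \<le> 2*(e/3)"
    then have "\<bar>\<theta>0 - t\<bar> < e" using e by (simp add: abs_minus_commute)
    then have "t \<in> ball \<theta>0 e" by (simp add: dist_real_def)
    then show "t \<in> cgf_dom F" using e by blast
  qed
qed

lemma abs_mult_exp_le: "\<bar>h\<bar> \<le> d \<Longrightarrow> exp (h * x) \<le> exp (d * \<bar>x\<bar>)" for h d x :: real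
proof -
  assume "\<bar>h\<bar> \<le> d"
  then have "h * x \<le> d * \<bar>x\<bar>"
    by (metis abs_ge_self abs_ge_zero abs_mult dual_order.trans mult_right_mono)
  then show ?thesis by simp
qed

lemma deriv_trunc:
  assumes S: "sets F = sets borel" and A[measurable]: "A \<in> sets borel"
    and th: "\<theta>0 \<in> interior (cgf_dom F)"
  shows "((\<lambda>\<theta>. \<integral>x. indicator A x * exp (\<theta>*x) \<partial>F) has_real_derivative
            (\<integral>x. indicator A x * (x * exp (\<theta>0*x)) \<partial>F)) (at \<theta>0)"
proof -
  obtain \<delta> where d: "\<delta> > 0" and dD: "\<And>t. \<bar>t - \<theta>0\<bar> \<le> 2*\<delta> \<Longrightarrow> t \<in> cgf_dom F"
    using interior_delta[OF th] by blast
  have p: "\<theta>0 + 2*\<delta> \<in> cgf_dom F" "\<theta>0 - 2*\<delta> \<in> cgf_dom F" "2*\<delta> > 0"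
    using dD[of "\<theta>0 + 2*\<delta>"] dD[of "\<theta>0 - 2*\<delta>"] d by auto
  define G where "G \<theta> = (\<integral>x. indicator A x * exp (\<theta>*x) \<partial>F)" for \<theta>
  define G1 where "G1 = (\<integral>x. indicator A x * (x * exp (\<theta>0*x)) \<partial>F)"
  define C where "C = (\<integral>x. exp (\<theta>0*x) * (x^2 * exp (\<delta>*\<bar>x\<bar>)) \<partial>F)"
  have iC: "integrable F (\<lambda>x. exp (\<theta>0*x) * (x^2 * exp (\<delta>*\<bar>x\<bar>)))"
  proof (rule int_bound[OF S p(3) p(1) p(2), where K="2/\<delta>^2"])
    show "(\<lambda>x. exp (\<theta>0*x) * (x^2 * exp (\<delta>*\<bar>x\<bar>))) \<in> borel_measurable borel" by measurable
    fix x
    have "x^2 * exp (\<delta>*\<bar>x\<bar>) \<le> (2/\<delta>^2) * exp (\<delta>*\<bar>x\<bar>) * exp (\<delta>*\<bar>x\<bar>)"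
      using sq_le_exp[OF d, of x] by (intro mult_right_mono) auto
    also have "\<dots> = (2/\<delta>^2) * exp (2*\<delta>*\<bar>x\<bar>)" by (simp add: mult_exp_exp)
    finally have "x^2 * exp (\<delta>*\<bar>x\<bar>) * exp (\<theta>0*x) \<le> (2/\<delta>^2) * exp (2*\<delta>*\<bar>x\<bar>) * exp (\<theta>0*x)"
      by (intro mult_right_mono) auto
    then show "\<bar>exp (\<theta>0*x) * (x^2 * exp (\<delta>*\<bar>x\<bar>))\<bar> \<le> 2/\<delta>^2 * (exp (2*\<delta>*\<bar>x\<bar>) * exp (\<theta>0*x))"
      by (simp add: algebra_simps)
  qed
  have i1: "integrable F (\<lambda>x. indicator A x * (x * exp (\<theta>0*x)))"
  proof (rule int_bound[OF S p(3) p(1) p(2), where K="1/(2*\<delta>)"])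
    show "(\<lambda>x. indicator A x * (x * exp (\<theta>0*x))) \<in> borel_measurable borel" by measurable
    fix x
    have "\<bar>indicator A x * (x * exp (\<theta>0*x))\<bar> \<le> \<bar>x\<bar> * exp (\<theta>0*x)"
      by (simp add: indicator_def abs_mult)
    also have "\<dots> \<le> (1/(2*\<delta>)) * exp (2*\<delta> * \<bar>x\<bar>) * exp (\<theta>0*x)"
      using abs_le_exp[OF p(3), of x] by (intro mult_right_mono) auto
    finally show "\<bar>indicator A x * (x * exp (\<theta>0*x))\<bar> \<le> 1/(2*\<delta>) * (exp (2*\<delta>*\<bar>x\<bar>) * exp (\<theta>0*x))"
      by (simp add: algebra_simps)
  qed
  have i0: "integrable F (\<lambda>x. indicator A x * exp ((\<theta>0+h)*x))" if h: "\<bar>h\<bar> \<le> 2*\<delta>" for h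
  proof (rule int_bound[OF S p(3) p(1) p(2), where K="1"])
    show "(\<lambda>x. indicator A x * exp ((\<theta>0+h)*x)) \<in> borel_measurable borel" by measurable
    fix x
    have "\<bar>indicator A x * exp ((\<theta>0+h)*x)\<bar> \<le> exp (h*x) * exp (\<theta>0*x)"
      by (simp add: indicator_def abs_mult mult_exp_exp algebra_simps)
    also have "\<dots> \<le> exp (2*\<delta>*\<bar>x\<bar>) * exp (\<theta>0*x)"
      using abs_mult_exp_le[OF h, of x] by (intro mult_right_mono) auto
    finally show "\<bar>indicator A x * exp ((\<theta>0+h)*x)\<bar> \<le> 1 * (exp (2*\<delta>*\<bar>x\<bar>) * exp (\<theta>0*x))"
      by simp
  qed
  have key: "\<bar>(G (\<theta>0 + h) - G \<theta>0) / h - G1\<bar> \<le> \<bar>h\<bar> * C" if h: "h \<noteq> 0" "\<bar>h\<bar> < \<delta>" for h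
  proof -
    have ia: "integrable F (\<lambda>x. indicator A x * exp ((\<theta>0+h)*x))" using i0[of h] h d by simp
    have ib: "integrable F (\<lambda>x. indicator A x * exp (\<theta>0*x))" using i0[of 0] d by simp
    define fa where "fa x = indicator A x * exp ((\<theta>0+h)*x)" for x
    define fb where "fb x = indicator A x * exp (\<theta>0*x)" for x
    define fc where "fc x = indicator A x * (x * exp (\<theta>0*x))" for x
    have ia': "integrable F fa" using ia unfolding fa_def .
    have ib': "integrable F fb" using ib unfolding fb_def .
    have ic': "integrable F fc" using i1 unfolding fc_def .
    have iab: "integrable F (\<lambda>x. fa x - fb x)" using ia' ib' by (rule Bochner_Integration.integrable_diff)
    have ihc: "integrable F (\<lambda>x. h * fc x)" using ic' by (rule integrable_mult_right)
    have "(\<integral>x. fa x - fb x - h * fc x \<partial>F) = (\<integral>x. fa x - fb x \<partial>F) - (\<integral>x. h * fc x \<partial>F)"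
      by (rule Bochner_Integration.integral_diff[OF iab ihc])
    also have "(\<integral>x. fa x - fb x \<partial>F) = integral\<^sup>L F fa - integral\<^sup>L F fb"
      by (rule Bochner_Integration.integral_diff[OF ia' ib'])
    also have "(\<integral>x. h * fc x \<partial>F) = h * integral\<^sup>L F fc"
      by (rule integral_mult_right_zero)
    finally have eq0: "(\<integral>x. fa x - fb x - h * fc x \<partial>F) = G (\<theta>0 + h) - G \<theta>0 - h * G1"
      unfolding G_def G1_def fa_def fb_def fc_def .
    have "norm (\<integral>x. fa x - fb x - h * fc x \<partial>F) \<le> (\<integral>x. norm (fa x - fb x - h * fc x) \<partial>F)"
      by (rule integral_norm_bound)
    then have "\<bar>G (\<theta>0 + h) - G \<theta>0 - h * G1\<bar> \<le> (\<integral>x. \<bar>fa x - fb x - h * fc x\<bar> \<partial>F)"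
      unfolding eq0 real_norm_def .
    also have "\<dots> = (\<integral>x. \<bar>indicator A x * exp ((\<theta>0+h)*x) - indicator A x * exp (\<theta>0*x)
              - h * (indicator A x * (x * exp (\<theta>0*x)))\<bar> \<partial>F)"
      unfolding fa_def fb_def fc_def by (rule refl)
    also have "\<dots> \<le> (\<integral>x. h^2 * (exp (\<theta>0*x) * (x^2 * exp (\<delta>*\<bar>x\<bar>))) \<partial>F)"
    proof (rule integral_mono)
      show "integrable F (\<lambda>x. \<bar>indicator A x * exp ((\<theta>0+h)*x) - indicator A x * exp (\<theta>0*x)
              - h * (indicator A x * (x * exp (\<theta>0*x)))\<bar>)"
        using ia ib i1 by auto
      show "integrable F (\<lambda>x. h^2 * (exp (\<theta>0*x) * (x^2 * exp (\<delta>*\<bar>x\<bar>))))"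
        using iC by auto
      fix x
      have e1: "indicator A x * exp ((\<theta>0+h)*x) - indicator A x * exp (\<theta>0*x)
              - h * (indicator A x * (x * exp (\<theta>0*x))) =
            indicator A x * exp (\<theta>0*x) * (exp (h*x) - 1 - h*x)"
        by (simp add: algebra_simps mult_exp_exp)
      have "\<bar>indicator A x * exp (\<theta>0*x) * (exp (h*x) - 1 - h*x)\<bar> \<le>
             exp (\<theta>0*x) * \<bar>exp (h*x) - 1 - h*x\<bar>"
        by (simp add: indicator_def abs_mult)
      also have "\<dots> \<le> exp (\<theta>0*x) * ((h*x)^2 * exp \<bar>h*x\<bar>)"
        using exp_taylor2[of "h*x"] by (intro mult_left_mono) auto
      also have "\<dots> \<le> exp (\<theta>0*x) * ((h*x)^2 * exp (\<delta>*\<bar>x\<bar>))"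
      proof -
        have "\<bar>h*x\<bar> \<le> \<delta>*\<bar>x\<bar>" using h by (simp add: abs_mult mult_right_mono)
        then show ?thesis by (intro mult_left_mono) auto
      qed
      also have "\<dots> = h^2 * (exp (\<theta>0*x) * (x^2 * exp (\<delta>*\<bar>x\<bar>)))"
        by (simp add: power_mult_distrib)
      finally show "\<bar>indicator A x * exp ((\<theta>0+h)*x) - indicator A x * exp (\<theta>0*x)
              - h * (indicator A x * (x * exp (\<theta>0*x)))\<bar> \<le> h^2 * (exp (\<theta>0*x) * (x^2 * exp (\<delta>*\<bar>x\<bar>)))"
        unfolding e1 .
    qed
    also have "\<dots> = h^2 * C" unfolding C_def by simp
    finally have b: "\<bar>G (\<theta>0 + h) - G \<theta>0 - h * G1\<bar> \<le> h^2 * C" .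
    have "(G (\<theta>0 + h) - G \<theta>0) / h - G1 = (G (\<theta>0 + h) - G \<theta>0 - h * G1) / h"
      using h by (simp add: field_simps)
    then have "\<bar>(G (\<theta>0 + h) - G \<theta>0) / h - G1\<bar> = \<bar>G (\<theta>0 + h) - G \<theta>0 - h * G1\<bar> / \<bar>h\<bar>"
      by simp
    also have "\<dots> \<le> h^2 * C / \<bar>h\<bar>" using b h by (intro divide_right_mono) auto
    also have "\<dots> = \<bar>h\<bar> * C"
    proof -
      have "h^2 = \<bar>h\<bar> * \<bar>h\<bar>" by (metis abs_mult_self_eq power2_eq_square)
      then have "h^2 * C / \<bar>h\<bar> = \<bar>h\<bar> * (\<bar>h\<bar> * C) / \<bar>h\<bar>" by (simp only: mult.assoc)
      also have "\<dots> = \<bar>h\<bar> * C" using h(1) by simp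
      finally show ?thesis .
    qed
    finally show ?thesis .
  qed
  have "((\<lambda>h. (G (\<theta>0 + h) - G \<theta>0) / h - G1) \<longlongrightarrow> 0) (at 0)"
  proof (rule Lim_null_comparison)
    show "\<forall>\<^sub>F h in at 0. norm ((G (\<theta>0 + h) - G \<theta>0) / h - G1) \<le> \<bar>h\<bar> * C"
      unfolding eventually_at using d key by (auto simp: dist_real_def intro!: exI[of _ \<delta>])
    show "((\<lambda>h::real. \<bar>h\<bar> * C) \<longlongrightarrow> 0) (at 0)"
      by (rule tendsto_eq_intros | simp)+
  qed
  then have "(G has_real_derivative G1) (at \<theta>0)"
    unfolding DERIV_def LIM_zero_iff .
  then show ?thesis unfolding G_def G1_def .
qed

lemma ln_one_minus_bound:
  fixes a :: real assumes "0 \<le> a" "a \<le> 1/2"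
  shows "\<bar>ln (1 - a)\<bar> \<le> 2 * a"
proof -
  have pos: "0 < 1 - a" using assms by simp
  have "ln (1 - a) \<le> 0" using assms by simp
  moreover have "- ln (1 - a) \<le> 2 * a"
  proof -
    have "- ln (1 - a) = ln (1 / (1 - a))" using pos by (simp add: ln_div)
    also have "\<dots> \<le> 1 / (1 - a) - 1" using pos by (intro ln_le_minus_one) simp
    also have "\<dots> = a / (1 - a)" using pos by (simp add: field_simps)
    also have "\<dots> \<le> a / (1/2)" using assms by (intro divide_left_mono) auto
    finally show ?thesis by simp
  qed
  ultimately show ?thesis by linarith
qed

lemma step_bounds:
  fixes M M1 T T1 q :: real
  assumes M: "M > 0" and q: "0 \<le> q" "q \<le> T" "T \<le> T1" "T1 \<le> M/2" "T1 \<le> 1/2"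
  shows "\<bar>(M1 - T1)/(M - T) - M1/M\<bar> \<le> (2*(\<bar>M1\<bar>+M)/M^2) * T1"
    and "\<bar>ln ((M - T)/(1 - q)) - ln M\<bar> \<le> (2/M + 2) * T1"
proof -
  have G: "M - T \<ge> M/2" using q by linarith
  have Gp: "M - T > 0" using G M by linarith
  have "(M1 - T1)/(M - T) - M1/M = (M1 * T - T1 * M) / ((M - T) * M)"
    using Gp M by (simp add: field_simps)
  then have "\<bar>(M1 - T1)/(M - T) - M1/M\<bar> = \<bar>M1 * T - T1 * M\<bar> / ((M - T) * M)"
    using Gp M by (simp add: abs_div)
  also have "\<dots> \<le> ((\<bar>M1\<bar> + M) * T1) / ((M/2) * M)"
  proof (rule frac_le)
    have "\<bar>M1 * T - T1 * M\<bar> \<le> \<bar>M1\<bar> * T + T1 * M"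
      using q M by (simp add: abs_mult) (smt (verit) abs_mult abs_of_nonneg abs_triangle_ineq4 mult_nonneg_nonneg)
    also have "\<dots> \<le> \<bar>M1\<bar> * T1 + T1 * M" using q by (intro add_right_mono mult_left_mono) auto
    finally show "\<bar>M1 * T - T1 * M\<bar> \<le> (\<bar>M1\<bar> + M) * T1" by (simp add: algebra_simps)
    show "0 \<le> (\<bar>M1\<bar> + M) * T1" using q M by simp
    show "0 < M / 2 * M" using M by simp
    show "M / 2 * M \<le> (M - T) * M" using G M by (intro mult_right_mono) auto
  qed
  also have "\<dots> = (2*(\<bar>M1\<bar>+M)/M^2) * T1" using M by (simp add: field_simps power2_eq_square)
  finally show "\<bar>(M1 - T1)/(M - T) - M1/M\<bar> \<le> (2*(\<bar>M1\<bar>+M)/M^2) * T1" .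
  have a1: "0 \<le> T/M" "T/M \<le> 1/2" using q M by (auto simp: field_simps)
  have a2: "0 \<le> q" "q \<le> 1/2" using q by auto
  have "M - T = M * (1 - T/M)" using M by (simp add: field_simps)
  then have "ln ((M - T)/(1 - q)) - ln M = ln (1 - T/M) - ln (1 - q)"
    using M a1 a2 by (simp add: ln_div ln_mult)
  then have "\<bar>ln ((M - T)/(1 - q)) - ln M\<bar> \<le> \<bar>ln (1 - T/M)\<bar> + \<bar>ln (1 - q)\<bar>" by simp
  also have "\<dots> \<le> 2 * (T/M) + 2 * q"
    using ln_one_minus_bound[OF a1] ln_one_minus_bound[OF a2] by linarith
  also have "\<dots> \<le> 2 * (T1/M) + 2 * T1"
    using q M by (intro add_mono mult_left_mono divide_right_mono) auto
  also have "\<dots> = (2/M + 2) * T1" by (simp add: algebra_simps)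
  finally show "\<bar>ln ((M - T)/(1 - q)) - ln M\<bar> \<le> (2/M + 2) * T1" .
qed


lemma int_facts:
  assumes S: "sets F = sets borel" and th: "\<theta>0 \<in> interior (cgf_dom F)"
  shows "integrable F (\<lambda>x. exp (\<theta>0*x))" "integrable F (\<lambda>x. x * exp (\<theta>0*x))"
proof -
  obtain \<delta> where d: "\<delta> > 0" and dD: "\<And>t. \<bar>t - \<theta>0\<bar> \<le> 2*\<delta> \<Longrightarrow> t \<in> cgf_dom F"
    using interior_delta[OF th] by blast
  have p: "\<theta>0 + 2*\<delta> \<in> cgf_dom F" "\<theta>0 - 2*\<delta> \<in> cgf_dom F" "2*\<delta> > 0"
    using dD[of "\<theta>0 + 2*\<delta>"] dD[of "\<theta>0 - 2*\<delta>"] d by auto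
  show "integrable F (\<lambda>x. exp (\<theta>0*x))" using th interior_subset unfolding cgf_dom_def by blast
  show "integrable F (\<lambda>x. x * exp (\<theta>0*x))"
  proof (rule int_bound[OF S p(3) p(1) p(2), where K="1/(2*\<delta>)"])
    show "(\<lambda>x. x * exp (\<theta>0*x)) \<in> borel_measurable borel" by measurable
    fix x
    have "\<bar>x * exp (\<theta>0*x)\<bar> = \<bar>x\<bar> * exp (\<theta>0*x)" by (simp add: abs_mult)
    also have "\<dots> \<le> (1/(2*\<delta>)) * exp (2*\<delta> * \<bar>x\<bar>) * exp (\<theta>0*x)"
      using abs_le_exp[OF p(3), of x] by (intro mult_right_mono) auto
    finally show "\<bar>x * exp (\<theta>0*x)\<bar> \<le> 1/(2*\<delta>) * (exp (2*\<delta>*\<bar>x\<bar>) * exp (\<theta>0*x))"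
      by (simp add: algebra_simps)
  qed
qed

theorem lemma2:
  fixes F :: "real measure" and \<mu> b \<theta>s :: real and u :: "nat \<Rightarrow> real"
  assumes "prob_space F" and "sets F = sets borel"
    and "\<mu> = (\<integral>x. x \<partial>F)"
    and "b > \<mu>"
    and "0 \<in> interior (cgf_dom F)"
    and "\<theta>s \<in> interior (cgf_dom F)" and "deriv (cgf F) \<theta>s = b"
    and "\<forall>\<theta>\<in>interior (cgf_dom F). deriv (cgf F) \<theta> = b \<longrightarrow> \<theta> = \<theta>s"
    and "\<exists>\<theta>'>0. \<theta>s + \<theta>' \<in> interior (cgf_dom F) \<and>
           (\<lambda>n. real n * exp (- \<theta>' * u n)) \<longlonglongrightarrow> 0"
  shows "(\<lambda>n. real n * (deriv (trunc_cgf F (u n)) \<theta>s - deriv (cgf F) \<theta>s)) \<longlonglongrightarrow> 0 \<and>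
         (\<lambda>n. real n * (trunc_cgf F (u n) \<theta>s - cgf F \<theta>s)) \<longlonglongrightarrow> 0"
proof -
  interpret P: prob_space F by fact
  have S: "sets F = sets borel" by fact
  have spF: "space F = UNIV" using sets_eq_imp_space_eq[OF S] by simp
  note th = assms(6)
  define M where "M = (\<integral>x. exp (\<theta>s*x) \<partial>F)"
  define M1 where "M1 = (\<integral>x. x * exp (\<theta>s*x) \<partial>F)"
  have iM: "integrable F (\<lambda>x. exp (\<theta>s*x))" and iM1: "integrable F (\<lambda>x. x * exp (\<theta>s*x))"
    using int_facts[OF S th] by auto
  have Mpos: "M > 0"
  proof -
    have "M \<ge> 0" unfolding M_def by (intro integral_nonneg_AE) auto
    moreover have "M \<noteq> 0"
    proof
      assume "M = 0"
      then have "AE x in F. exp (\<theta>s*x) = 0" using integral_nonneg_eq_0_iff_AE[OF iM] unfolding M_def by auto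
      then have "AE x in F. False" by simp
      then show False using P.AE_False by simp
    qed
    ultimately show ?thesis by simp
  qed
  have dM: "((\<lambda>\<theta>. \<integral>x. exp (\<theta>*x) \<partial>F) has_real_derivative M1) (at \<theta>s)"
    using deriv_trunc[OF S _ th, of UNIV] unfolding M1_def by simp
  have d1: "DERIV ln (\<integral>x. exp (\<theta>s*x) \<partial>F) :> 1/M" using DERIV_ln_divide[OF Mpos] unfolding M_def .
  have "DERIV (\<lambda>\<theta>. ln (\<integral>x. exp (\<theta>*x) \<partial>F)) \<theta>s :> 1/M * M1"
    using DERIV_chain2[OF d1 dM] .
  then have "DERIV (cgf F) \<theta>s :> M1 / M" by (simp add: cgf_def[abs_def])
  then have dcgf: "deriv (cgf F) \<theta>s = M1 / M" by (rule DERIV_imp_deriv)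
  have i0: "integrable F (\<lambda>x. x)" using int_facts(2)[OF S assms(5)] by simp
  have th_nonneg: "\<theta>s \<ge> 0"
  proof (rule ccontr)
    assume "\<not> \<theta>s \<ge> 0" then have neg: "\<theta>s < 0" by simp
    have pw: "(x - \<mu>) * (exp (\<theta>s*x) - exp (\<theta>s*\<mu>)) \<le> 0" for x
    proof (cases "x \<ge> \<mu>")
      case True then have "exp (\<theta>s*x) \<le> exp (\<theta>s*\<mu>)" using neg by (simp add: mult_left_mono_neg)
      then show ?thesis using True by (simp add: mult_nonneg_nonpos)
    next
      case False then have "exp (\<theta>s*x) \<ge> exp (\<theta>s*\<mu>)" using neg by (simp add: mult_left_mono_neg)
      then show ?thesis using False by (simp add: mult_nonpos_nonneg)
    qed
    have eqf: "(\<lambda>x. (x - \<mu>) * (exp (\<theta>s*x) - exp (\<theta>s*\<mu>))) =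
       (\<lambda>x. (x * exp (\<theta>s*x) - \<mu> * exp (\<theta>s*x)) - exp (\<theta>s*\<mu>) * (x - \<mu>))"
      by (auto simp: algebra_simps)
    have iA: "integrable F (\<lambda>x. x * exp (\<theta>s*x) - \<mu> * exp (\<theta>s*x))" using iM iM1 by auto
    have iB: "integrable F (\<lambda>x. exp (\<theta>s*\<mu>) * (x - \<mu>))" using i0 by auto
    have I0: "(\<integral>x. x - \<mu> \<partial>F) = 0" using i0 assms(3) by (simp add: P.prob_space)
    have "(\<integral>x. (x - \<mu>) * (exp (\<theta>s*x) - exp (\<theta>s*\<mu>)) \<partial>F) = M1 - \<mu> * M"
      unfolding eqf using iA iB I0 iM iM1 i0 by (simp add: M_def M1_def)
    moreover have "0 \<le> (\<integral>x. - ((x - \<mu>) * (exp (\<theta>s*x) - exp (\<theta>s*\<mu>))) \<partial>F)"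
      using pw by (intro integral_nonneg_AE) (auto simp: not_le)
    ultimately have "M1 \<le> \<mu> * M" by simp
    then have "M1 / M \<le> \<mu>" using Mpos by (simp add: pos_divide_le_eq)
    then show False using dcgf assms(7) assms(4) by simp
  qed
  obtain \<theta>' where th': "\<theta>' > 0" "\<theta>s + \<theta>' \<in> interior (cgf_dom F)"
    and lim: "(\<lambda>n. real n * exp (- \<theta>' * u n)) \<longlonglongrightarrow> 0"
    using assms(9) by blast
  obtain \<delta> where d: "\<delta> > 0" and dD: "\<And>t. \<bar>t - (\<theta>s + \<theta>')\<bar> \<le> 2*\<delta> \<Longrightarrow> t \<in> cgf_dom F"
    using interior_delta[OF th'(2)] by blast
  define \<epsilon> where "\<epsilon> = 2*\<delta>"
  define c where "c = \<theta>s + \<theta>' + \<epsilon>"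
  have eps: "\<epsilon> > 0" using d unfolding \<epsilon>_def by simp
  have cD: "c \<in> cgf_dom F" using dD[of c] d unfolding c_def \<epsilon>_def by simp
  then have iMc: "integrable F (\<lambda>x. exp (c*x))" unfolding cgf_dom_def by simp
  define Mc where "Mc = (\<integral>x. exp (c*x) \<partial>F)"
  define T1 where "T1 v = (\<integral>x. indicator {v<..} x * (x * exp (\<theta>s*x)) \<partial>F)" for v
  define T where "T v = (\<integral>x. indicator {v<..} x * exp (\<theta>s*x) \<partial>F)" for v
  have setsI: "{v<..} \<in> sets F" "{..v} \<in> sets F" for v :: real using S by auto
  have iT1: "integrable F (\<lambda>x. indicator {v<..} x * (x * exp (\<theta>s*x)))" for v
    using integrable_mult_indicator[OF setsI(1) iM1] by simp
  have iT: "integrable F (\<lambda>x. indicator {v<..} x * exp (\<theta>s*x))" for v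
    using integrable_mult_indicator[OF setsI(1) iM] by simp
  have iq: "integrable F (\<lambda>x. indicator {v<..} x :: real)" for v
    using integrable_mult_indicator[OF setsI(1), of "\<lambda>x. 1::real"] by simp
  have T1_bound: "T1 v \<le> (1/\<epsilon>) * exp (- \<theta>' * v) * Mc" if v: "v \<ge> 1" for v
  proof -
    have "T1 v \<le> (\<integral>x. (1/\<epsilon>) * exp (- \<theta>' * v) * exp (c*x) \<partial>F)"
      unfolding T1_def
    proof (rule integral_mono)
      show "integrable F (\<lambda>x. indicator {v<..} x * (x * exp (\<theta>s*x)))" by (rule iT1)
      show "integrable F (\<lambda>x. (1/\<epsilon>) * exp (- \<theta>' * v) * exp (c*x))" using iMc by simp
      fix x
      show "indicator {v<..} x * (x * exp (\<theta>s*x)) \<le> (1/\<epsilon>) * exp (- \<theta>' * v) * exp (c*x)"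
      proof (cases "x > v")
        case True
        then have xp: "x > 0" using v by simp
        have "x * exp (\<theta>s*x) \<le> (1/\<epsilon>) * exp (\<epsilon> * x) * exp (\<theta>s*x)"
          using abs_le_exp[OF eps, of x] xp by (intro mult_right_mono) auto
        also have "\<dots> = (1/\<epsilon>) * exp (- \<theta>' * x) * exp (c*x)"
          by (simp add: c_def mult_exp_exp algebra_simps)
        also have "\<dots> \<le> (1/\<epsilon>) * exp (- \<theta>' * v) * exp (c*x)"
          using True th'(1) eps by (intro mult_right_mono mult_left_mono) auto
        finally show ?thesis using True by simp
      next
        case False
        then show ?thesis using eps by simp
      qed
    qed
    also have "\<dots> = (1/\<epsilon>) * exp (- \<theta>' * v) * Mc" unfolding Mc_def by simp
    finally show ?thesis .
  qed
  have qT: "measure F {v<..} \<le> T v" "T v \<le> T1 v" "0 \<le> measure F {v<..}" if v: "v \<ge> 1" for v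
  proof -
    have "measure F {v<..} = (\<integral>x. indicator {v<..} x \<partial>F)" using spF by simp
    also have "\<dots> \<le> T v" unfolding T_def
    proof (rule integral_mono[OF iq iT])
      fix x show "indicator {v<..} x \<le> indicator {v<..} x * exp (\<theta>s*x)"
        using v th_nonneg by (auto simp: indicator_def)
    qed
    finally show "measure F {v<..} \<le> T v" .
    show "T v \<le> T1 v" unfolding T_def T1_def
    proof (rule integral_mono[OF iT iT1])
      fix x show "indicator {v<..} x * exp (\<theta>s*x) \<le> indicator {v<..} x * (x * exp (\<theta>s*x))"
        using v by (auto simp: indicator_def)
    qed
    show "0 \<le> measure F {v<..}" by simp
  qed
  have T1_nonneg: "0 \<le> T1 v" if "v \<ge> 1" for v
    unfolding T1_def using that by (intro integral_nonneg_AE) (auto simp: indicator_def)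
  have ev_u: "eventually (\<lambda>n. u n \<ge> 1) sequentially"
  proof -
    have "eventually (\<lambda>n. real n * exp (- \<theta>' * u n) < exp (- \<theta>')) sequentially"
      using order_tendstoD(2)[OF lim] by simp
    moreover have "eventually (\<lambda>n. n \<ge> 1) sequentially" by (rule eventually_ge_at_top)
    ultimately show ?thesis
    proof eventually_elim
      case (elim n)
      show ?case
      proof (rule ccontr)
        assume "\<not> 1 \<le> u n"
        then have "exp (- \<theta>') < exp (- \<theta>' * u n)" using th'(1) by simp
        also have "\<dots> \<le> real n * exp (- \<theta>' * u n)" using elim(2) by simp
        finally show False using elim(1) by simp
      qed
    qed
  qed
  have limT1: "(\<lambda>n. real n * T1 (u n)) \<longlonglongrightarrow> 0"
  proof (rule Lim_null_comparison)
    show "eventually (\<lambda>n. norm (real n * T1 (u n)) \<le> ((1/\<epsilon>) * Mc) * (real n * exp (- \<theta>' * u n))) sequentially"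
      using ev_u
    proof eventually_elim
      case (elim n)
      have "norm (real n * T1 (u n)) = real n * T1 (u n)" using T1_nonneg[OF elim] by simp
      also have "\<dots> \<le> real n * ((1/\<epsilon>) * exp (- \<theta>' * u n) * Mc)"
        using T1_bound[OF elim] by (intro mult_left_mono) auto
      finally show ?case by (simp add: algebra_simps)
    qed
    show "(\<lambda>n. ((1/\<epsilon>) * Mc) * (real n * exp (- \<theta>' * u n))) \<longlonglongrightarrow> 0"
      using tendsto_mult_right_zero[OF lim] .
  qed
  define \<kappa> where "\<kappa> = min (M/2) (1/2)"
  have kap: "\<kappa> > 0" using Mpos unfolding \<kappa>_def by simp
  have ev_small: "eventually (\<lambda>n. u n \<ge> 1 \<and> T1 (u n) \<le> M/2 \<and> T1 (u n) \<le> 1/2) sequentially"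
  proof -
    have "eventually (\<lambda>n. real n * T1 (u n) < \<kappa>) sequentially"
      using order_tendstoD(2)[OF limT1 kap] .
    moreover have "eventually (\<lambda>n. n \<ge> 1) sequentially" by (rule eventually_ge_at_top)
    ultimately show ?thesis using ev_u
    proof eventually_elim
      case (elim n)
      have n1: "(1::real) \<le> real n" using elim(2) by simp
      have "1 * T1 (u n) \<le> real n * T1 (u n)"
        using T1_nonneg[OF elim(3)] n1 by (intro mult_right_mono) auto
      then have "T1 (u n) \<le> real n * T1 (u n)" by simp
      then have "T1 (u n) \<le> \<kappa>" using elim by simp
      then show ?case using elim unfolding \<kappa>_def by simp
    qed
  qed
  have per: "deriv (trunc_cgf F v) \<theta>s = (M1 - T1 v)/(M - T v) \<and>
             trunc_cgf F v \<theta>s = ln ((M - T v)/(1 - measure F {v<..}))"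
    if v: "v \<ge> 1" "T1 v \<le> M/2" "T1 v \<le> 1/2" for v
  proof -
    define G where "G = (\<integral>x. indicator {..v} x * exp (\<theta>s*x) \<partial>F)"
    define G1 where "G1 = (\<integral>x. indicator {..v} x * (x * exp (\<theta>s*x)) \<partial>F)"
    define p where "p = measure F {..v}"
    have ind: "indicator {..v} x = (1::real) - indicator {v<..} x" for x
      by (auto simp: indicator_def)
    have GT: "G = M - T v"
    proof -
      have "G = (\<integral>x. exp (\<theta>s*x) - indicator {v<..} x * exp (\<theta>s*x) \<partial>F)"
        unfolding G_def ind by (simp add: algebra_simps)
      also have "\<dots> = M - T v" unfolding M_def T_def using iM iT by simp
      finally show ?thesis .
    qed
    have G1T: "G1 = M1 - T1 v"
    proof -
      have "G1 = (\<integral>x. x * exp (\<theta>s*x) - indicator {v<..} x * (x * exp (\<theta>s*x)) \<partial>F)"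
        unfolding G1_def ind by (simp add: algebra_simps)
      also have "\<dots> = M1 - T1 v" unfolding M1_def T1_def using iM1 iT1 by simp
      finally show ?thesis .
    qed
    have pq: "p = 1 - measure F {v<..}"
    proof -
      have "{..v} = space F - {v<..}" using spF by auto
      then show ?thesis unfolding p_def using P.prob_compl[OF setsI(1)] by simp
    qed
    have Gpos: "G > 0" using GT qT[OF v(1)] v Mpos by linarith
    have ppos: "p > 0" using pq qT[OF v(1)] v by linarith
    have tr: "trunc_cgf F v = (\<lambda>t. ln ((\<integral>x. indicator {..v} x * exp (t*x) \<partial>F) / p))"
      by (simp add: fun_eq_iff trunc_cgf_def set_lebesgue_integral_def p_def)
    have dG: "DERIV (\<lambda>t. (\<integral>x. indicator {..v} x * exp (t*x) \<partial>F)) \<theta>s :> G1"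
      unfolding G1_def by (rule deriv_trunc[OF S _ th]) simp
    have dGp: "DERIV (\<lambda>t. (\<integral>x. indicator {..v} x * exp (t*x) \<partial>F) / p) \<theta>s :> G1 / p"
      by (rule DERIV_cdivide[OF dG])
    have dl: "DERIV ln ((\<lambda>t. (\<integral>x. indicator {..v} x * exp (t*x) \<partial>F) / p) \<theta>s) :> 1 / (G / p)"
      using DERIV_ln_divide[of "G/p"] Gpos ppos unfolding G_def by simp
    have "DERIV (trunc_cgf F v) \<theta>s :> 1 / (G / p) * (G1 / p)"
      unfolding tr using DERIV_chain2[OF dl dGp] .
    moreover have "1 / (G / p) * (G1 / p) = G1 / G" using ppos Gpos by (simp add: field_simps)
    ultimately have "deriv (trunc_cgf F v) \<theta>s = G1 / G" using DERIV_imp_deriv by metis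
    moreover have "trunc_cgf F v \<theta>s = ln (G / p)" unfolding tr G_def by simp
    ultimately show ?thesis using GT G1T pq by simp
  qed
  define K1 where "K1 = 2*(\<bar>M1\<bar>+M)/M^2"
  define K2 where "K2 = 2/M + 2"
  have bounds: "\<bar>deriv (trunc_cgf F (u n)) \<theta>s - deriv (cgf F) \<theta>s\<bar> \<le> K1 * T1 (u n) \<and>
                \<bar>trunc_cgf F (u n) \<theta>s - cgf F \<theta>s\<bar> \<le> K2 * T1 (u n)"
    if v: "u n \<ge> 1" "T1 (u n) \<le> M/2" "T1 (u n) \<le> 1/2" for n
  proof -
    note qq = qT[OF v(1)]
    have cg: "cgf F \<theta>s = ln M" unfolding cgf_def M_def ..
    show ?thesis
      using per[OF v] step_bounds(1)[OF Mpos qq(3) qq(1) qq(2) v(2) v(3), of M1]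
        step_bounds(2)[OF Mpos qq(3) qq(1) qq(2) v(2) v(3)] dcgf cg
      unfolding K1_def K2_def by simp
  qed
  show ?thesis
  proof
    show "(\<lambda>n. real n * (deriv (trunc_cgf F (u n)) \<theta>s - deriv (cgf F) \<theta>s)) \<longlonglongrightarrow> 0"
    proof (rule Lim_null_comparison)
      show "eventually (\<lambda>n. norm (real n * (deriv (trunc_cgf F (u n)) \<theta>s - deriv (cgf F) \<theta>s)) \<le> K1 * (real n * T1 (u n))) sequentially"
        using ev_small
      proof eventually_elim
        case (elim n)
        then have "\<bar>deriv (trunc_cgf F (u n)) \<theta>s - deriv (cgf F) \<theta>s\<bar> \<le> K1 * T1 (u n)"
          using bounds by blast
        then have h1: "real n * \<bar>deriv (trunc_cgf F (u n)) \<theta>s - deriv (cgf F) \<theta>s\<bar> \<le> real n * (K1 * T1 (u n))"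
          by (intro mult_left_mono) auto
        have h2: "norm (real n * (deriv (trunc_cgf F (u n)) \<theta>s - deriv (cgf F) \<theta>s)) = real n * \<bar>deriv (trunc_cgf F (u n)) \<theta>s - deriv (cgf F) \<theta>s\<bar>" by (simp add: abs_mult)
        have h3: "real n * (K1 * T1 (u n)) = K1 * (real n * T1 (u n))" by (simp add: algebra_simps)
        show ?case using h1 h2 h3 by linarith
      qed
      show "(\<lambda>n. K1 * (real n * T1 (u n))) \<longlonglongrightarrow> 0" using tendsto_mult_right_zero[OF limT1] .
    qed
    show "(\<lambda>n. real n * (trunc_cgf F (u n) \<theta>s - cgf F \<theta>s)) \<longlonglongrightarrow> 0"
    proof (rule Lim_null_comparison)
      show "eventually (\<lambda>n. norm (real n * (trunc_cgf F (u n) \<theta>s - cgf F \<theta>s)) \<le> K2 * (real n * T1 (u n))) sequentially"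
        using ev_small
      proof eventually_elim
        case (elim n)
        then have "\<bar>trunc_cgf F (u n) \<theta>s - cgf F \<theta>s\<bar> \<le> K2 * T1 (u n)"
          using bounds by blast
        then have h1: "real n * \<bar>trunc_cgf F (u n) \<theta>s - cgf F \<theta>s\<bar> \<le> real n * (K2 * T1 (u n))"
          by (intro mult_left_mono) auto
        have h2: "norm (real n * (trunc_cgf F (u n) \<theta>s - cgf F \<theta>s)) = real n * \<bar>trunc_cgf F (u n) \<theta>s - cgf F \<theta>s\<bar>" by (simp add: abs_mult)
        have h3: "real n * (K2 * T1 (u n)) = K2 * (real n * T1 (u n))" by (simp add: algebra_simps)
        show ?case using h1 h2 h3 by linarith
      qed
      show "(\<lambda>n. K2 * (real n * T1 (u n))) \<longlonglongrightarrow> 0" using tendsto_mult_right_zero[OF limT1] .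
    qed
  qed
qed

end
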